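(* Assume (A1)–(A4) below. Let $\gamma<\min(H,\hat H)$ and $1/p\in(1/3,\gamma)$. Then for all $0\le s<t\le T$ and all $\epsilon\in(0,1]$, $$\|X^\epsilon_t-X^\epsilon_s\|\le C_2(t-s)^\gamma,$$ where $C_2>0$ depends on $C_1, C_p, C_f, C_h, \|f\|_\infty$ and $|||\boldsymbol{\omega_1}|||_{\gamma,[0,T]}$, but is independent of $\epsilon$.
   Context: $T>0$, $H,\hat H\in(1/3,1/2]$, $q=p/2$. $\omega_1$ is a sample path of a $d_1$-dimensional FBM with Hurst index $H$, lifted to the geometric rough path $\boldsymbol{\omega_1}=(\omega_1,\mathbb{W}_1)$ ($\mathbb{W}^{i,j}_{1,s,t}=\int_s^t(\omega_1^i(r)-\omega_1^i(s))d\omega_1^j(r)$, $i\ne j$; $\mathbb{W}^{i,i}_{1,s,t}=(\omega_1^i(t)-\omega_1^i(s))^2/2$), which is a $\gamma$-Hölder rough path; $|||\boldsymbol{\omega_1}|||_{\gamma,I}=\sup_{s<t\in I}\frac{\|\omega_1(t)-\omega_1(s)\|}{(t-s)^\gamma}+\big(\sup_{s<t\in I}\frac{\|\mathbb{W}_{1,s,t}\|}{(t-s)^{2\gamma}}\big)^{1/2}$. $\omega_2$ is an independent two-sided $m$-dimensional FBM path with Hurst $\hat H$; $\omega_{2,\epsilon}(t)=\omega_2(t/\epsilon)$. Assumptions: (A1) $f:\mathbb{R}^n\times\mathbb{R}^m\to\mathbb{R}^n$ globally Lipschitz with constant $C_f$; (A2) $h\in C_b^3(\mathbb{R}^n,\mathcal{L}(\mathbb{R}^{d_1},\mathbb{R}^n))$,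 $C_h=\max\{\|h\|_\infty,\|Dh\|_\infty,\|D^2h\|_\infty,\|D^3h\|_\infty\}$; (A3) $g:\mathbb{R}^n\times\mathbb{R}^m\to\mathbb{R}^m$ globally Lipschitz; (A4) $f$ bounded with sup norm $\|f\|_\infty$. $(X^\epsilon,Y^\epsilon)$ solves on $[0,T]$: $X^\epsilon_t=X_0+\int_0^tf(X^\epsilon_r,Y^\epsilon_r)dr+\int_0^th(X^\epsilon_r)d\boldsymbol{\omega_1}(r)$ (Gubinelli rough integral, Gubinelli derivative of the integrand $Dh(X^\epsilon)h(X^\epsilon)$), $Y^\epsilon_t=Y_0+\frac1\epsilon\int_0^tg(X^\epsilon_r,Y^\epsilon_r)dr+\omega_{2,\epsilon}(t)$. $C_1$ is an $\epsilon$-independent constant with $\|X^\epsilon\|_{\infty,[0,T]}+|||X^\epsilon|||_{p\text{-var},[0,T]}+|||R^{X^\epsilon}|||_{q\text{-var},[0,T]^2}\le C_1$, where $R^{X}_{s,t}=X_t-X_s-h(X_s)(\omega_1(t)-\omega_1(s))$. $C_p>1$ is the $p$-dependent constant of the rough-integral sewing estimate $\|\int_s^ty_ud\boldsymbol{\omega_1}-y_s\omega_{1,s,t}-y'_s\mathbb{W}_{1,s,t}\|\le C_p(|||\omega_1|||_{p\text{-var},[s,t]}|||R^y|||_{q\text{-var},[s,t]^2}+|||y'|||_{p\text{-var},[s,t]}|||\mathbb{W}_1|||_{q\text{-var},[s,t]^2})$. *)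

theory Defs
  imports "HOL-Analysis.Analysis"
begin

definition is_partition :: "(nat \<Rightarrow> real) \<Rightarrow> nat \<Rightarrow> real \<Rightarrow> real \<Rightarrow> bool" where
  "is_partition u k s t \<longleftrightarrow> u 0 = s \<and> u k = t \<and> (\<forall>i<k. u i < u (Suc i))"

definition pvar_sums :: "(real \<Rightarrow> 'a::real_normed_vector) \<Rightarrow> real \<Rightarrow> real \<Rightarrow> real \<Rightarrow> real set" where
  "pvar_sums x p s t =
     {(\<Sum>i<k. norm (x (u (Suc i)) - x (u i)) powr p) | u k. is_partition u k s t}"

definition finite_pvar :: "(real \<Rightarrow> 'a::real_normed_vector) \<Rightarrow> real \<Rightarrow> real \<Rightarrow> real \<Rightarrow> bool" where
  "finite_pvar x p s t \<longleftrightarrow> bdd_above (pvar_sums x p s t)"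

text \<open>The p-variation seminorm |||x|||_{p-var,[s,t]} (meaningful when finite_pvar holds).\<close>
definition pvar :: "(real \<Rightarrow> 'a::real_normed_vector) \<Rightarrow> real \<Rightarrow> real \<Rightarrow> real \<Rightarrow> real" where
  "pvar x p s t = (Sup (pvar_sums x p s t)) powr (1 / p)"

definition qvar2_sums :: "(real \<Rightarrow> real \<Rightarrow> 'a::real_normed_vector) \<Rightarrow> real \<Rightarrow> real \<Rightarrow> real \<Rightarrow> real set" where
  "qvar2_sums R q s t =
     {(\<Sum>i<k. norm (R (u i) (u (Suc i))) powr q) | u k. is_partition u k s t}"

definition finite_qvar2 :: "(real \<Rightarrow> real \<Rightarrow> 'a::real_normed_vector) \<Rightarrow> real \<Rightarrow> real \<Rightarrow> real \<Rightarrow> bool" where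
  "finite_qvar2 R q s t \<longleftrightarrow> bdd_above (qvar2_sums R q s t)"

definition qvar2 :: "(real \<Rightarrow> real \<Rightarrow> 'a::real_normed_vector) \<Rightarrow> real \<Rightarrow> real \<Rightarrow> real \<Rightarrow> real" where
  "qvar2 R q s t = (Sup (qvar2_sums R q s t)) powr (1 / q)"

definition supnorm :: "(real \<Rightarrow> 'a::real_normed_vector) \<Rightarrow> real \<Rightarrow> real \<Rightarrow> real" where
  "supnorm x a b = Sup ((\<lambda>t. norm (x t)) ` {a..b})"

definition holder1_set :: "(real \<Rightarrow> 'a::real_normed_vector) \<Rightarrow> real \<Rightarrow> real \<Rightarrow> real \<Rightarrow> real set" where
  "holder1_set w \<gamma> a b = {norm (w t - w s) / (t - s) powr \<gamma> | s t. a \<le> s \<and> s < t \<and> t \<le> b}"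

definition holder2_set :: "(real \<Rightarrow> real \<Rightarrow> 'a::real_normed_vector) \<Rightarrow> real \<Rightarrow> real \<Rightarrow> real \<Rightarrow> real set" where
  "holder2_set W \<gamma> a b = {norm (W s t) / (t - s) powr (2 * \<gamma>) | s t. a \<le> s \<and> s < t \<and> t \<le> b}"

definition rp_holder_norm ::
  "(real \<Rightarrow> 'a::real_normed_vector) \<Rightarrow> (real \<Rightarrow> real \<Rightarrow> 'b::real_normed_vector) \<Rightarrow> real \<Rightarrow> real \<Rightarrow> real \<Rightarrow> real" where
  "rp_holder_norm w W \<gamma> a b = Sup (holder1_set w \<gamma> a b) + sqrt (Sup (holder2_set W \<gamma> a b))"

definition outer :: "real^'d \<Rightarrow> real^'d \<Rightarrow> real^'d^'d" where
  "outer a b = (\<chi> i j. a $ i * b $ j)"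

text \<open>(w,W) is a geometric gamma-Hoelder rough path on [a,b]:
  Chen's relation, geometricity (symmetric part of W = half the tensor square of the
  increment, in particular W^{ii}_{s,t} = (w^i_t - w^i_s)^2/2), finite gamma-Hoelder norms.\<close>
definition geometric_holder_rough_path ::
  "(real \<Rightarrow> real^'d) \<Rightarrow> (real \<Rightarrow> real \<Rightarrow> real^'d^'d) \<Rightarrow> real \<Rightarrow> real \<Rightarrow> real \<Rightarrow> bool" where
  "geometric_holder_rough_path w W \<gamma> a b \<longleftrightarrow>
     (\<forall>s u t. a \<le> s \<and> s \<le> u \<and> u \<le> t \<and> t \<le> b \<longrightarrow>
        W s t = W s u + W u t + outer (w u - w s) (w t - w u)) \<and>
     (\<forall>s t i j. a \<le> s \<and> s \<le> t \<and> t \<le> b \<longrightarrow>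
        W s t $ i $ j + W s t $ j $ i = (w t $ i - w s $ i) * (w t $ j - w s $ j)) \<and>
     (\<forall>s t i. a \<le> s \<and> s \<le> t \<and> t \<le> b \<longrightarrow>
        W s t $ i $ i = (w t $ i - w s $ i)^2 / 2) \<and>
     bdd_above (holder1_set w \<gamma> a b) \<and> bdd_above (holder2_set W \<gamma> a b)"

text \<open>Second order term y'_s W_{s,t} for y' in L(R^d, L(R^d, R^n)) (matrices as L(R^d,R^n)).\<close>
definition second_order_term :: "((real^'d) \<Rightarrow>\<^sub>L (real^'d^'n)) \<Rightarrow> real^'d^'d \<Rightarrow> real^'n" where
  "second_order_term A V = (\<Sum>i\<in>UNIV. \<Sum>j\<in>UNIV. V $ i $ j *\<^sub>R (blinfun_apply A (axis i 1) *v axis j 1))"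

definition has_rough_integral ::
  "(real \<Rightarrow> real^'d) \<Rightarrow> (real \<Rightarrow> real \<Rightarrow> real^'d^'d) \<Rightarrow> (real \<Rightarrow> real^'d^'n) \<Rightarrow>
   (real \<Rightarrow> ((real^'d) \<Rightarrow>\<^sub>L (real^'d^'n))) \<Rightarrow> real \<Rightarrow> real \<Rightarrow> real^'n \<Rightarrow> bool" where
  "has_rough_integral w W y y' s t I \<longleftrightarrow>
     (\<forall>e>0. \<exists>\<delta>>0. \<forall>u k. is_partition u k s t \<and> (\<forall>i<k. u (Suc i) - u i < \<delta>) \<longrightarrow>
        norm ((\<Sum>i<k. y (u i) *v (w (u (Suc i)) - w (u i))
                      + second_order_term (y' (u i)) (W (u i) (u (Suc i)))) - I) < e)"

definition ctrl_remainder ::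
  "(real \<Rightarrow> real^'d) \<Rightarrow> (real \<Rightarrow> real^'d^'n) \<Rightarrow> (real \<Rightarrow> ((real^'d) \<Rightarrow>\<^sub>L (real^'d^'n))) \<Rightarrow>
   real \<Rightarrow> real \<Rightarrow> (real^'d^'n)" where
  "ctrl_remainder w y y' s t = y t - y s - blinfun_apply (y' s) (w t - w s)"

definition sewing_constant ::
  "real \<Rightarrow> (real \<Rightarrow> real^'d) \<Rightarrow> (real \<Rightarrow> real \<Rightarrow> real^'d^'d) \<Rightarrow> real \<Rightarrow> real \<Rightarrow> ('n::finite) itself \<Rightarrow> bool" where
  "sewing_constant Cp w W p T (_ :: 'n itself) \<longleftrightarrow>
     (\<forall>(y :: real \<Rightarrow> real^'d^'n) y' s t I.
        0 \<le> s \<and> s < t \<and> t \<le> T \<and> has_rough_integral w W y y' s t I \<and>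
        finite_pvar y' p s t \<and> finite_qvar2 (ctrl_remainder w y y') (p / 2) s t \<longrightarrow>
        norm (I - y s *v (w t - w s) - second_order_term (y' s) (W s t))
          \<le> Cp * (pvar w p s t * qvar2 (ctrl_remainder w y y') (p / 2) s t
                  + pvar y' p s t * qvar2 W (p / 2) s t))"

definition Cb3_with ::
  "(real^'n \<Rightarrow> real^'d^'n) \<Rightarrow> (real^'n \<Rightarrow> ((real^'n) \<Rightarrow>\<^sub>L (real^'d^'n))) \<Rightarrow>
   (real^'n \<Rightarrow> ((real^'n) \<Rightarrow>\<^sub>L ((real^'n) \<Rightarrow>\<^sub>L (real^'d^'n)))) \<Rightarrow>
   (real^'n \<Rightarrow> ((real^'n) \<Rightarrow>\<^sub>L ((real^'n) \<Rightarrow>\<^sub>L ((real^'n) \<Rightarrow>\<^sub>L (real^'d^'n))))) \<Rightarrow> bool" where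
  "Cb3_with h Dh D2h D3h \<longleftrightarrow>
     (\<forall>x. (h has_derivative blinfun_apply (Dh x)) (at x)) \<and>
     (\<forall>x. (Dh has_derivative blinfun_apply (D2h x)) (at x)) \<and>
     (\<forall>x. (D2h has_derivative blinfun_apply (D3h x)) (at x)) \<and>
     continuous_on UNIV D3h \<and>
     bounded (range h) \<and> bounded (range Dh) \<and> bounded (range D2h) \<and> bounded (range D3h)"

definition C_h_const ::
  "(real^'n \<Rightarrow> real^'d^'n) \<Rightarrow> (real^'n \<Rightarrow> ((real^'n) \<Rightarrow>\<^sub>L (real^'d^'n))) \<Rightarrow>
   (real^'n \<Rightarrow> ((real^'n) \<Rightarrow>\<^sub>L ((real^'n) \<Rightarrow>\<^sub>L (real^'d^'n)))) \<Rightarrow>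
   (real^'n \<Rightarrow> ((real^'n) \<Rightarrow>\<^sub>L ((real^'n) \<Rightarrow>\<^sub>L ((real^'n) \<Rightarrow>\<^sub>L (real^'d^'n))))) \<Rightarrow> real" where
  "C_h_const h Dh D2h D3h =
     max (max (SUP x. norm (h x)) (SUP x. norm (Dh x))) (max (SUP x. norm (D2h x)) (SUP x. norm (D3h x)))"

definition gub_deriv ::
  "(real^'n \<Rightarrow> real^'d^'n) \<Rightarrow> (real^'n \<Rightarrow> ((real^'n) \<Rightarrow>\<^sub>L (real^'d^'n))) \<Rightarrow> real^'n \<Rightarrow> ((real^'d) \<Rightarrow>\<^sub>L (real^'d^'n))" where
  "gub_deriv h Dh x = Blinfun (\<lambda>v. blinfun_apply (Dh x) (h x *v v))"

definition solves_slow_fast ::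
  "real \<Rightarrow> (real \<Rightarrow> real^'d) \<Rightarrow> (real \<Rightarrow> real \<Rightarrow> real^'d^'d) \<Rightarrow> (real \<Rightarrow> real^'m) \<Rightarrow>
   (real^'n \<Rightarrow> real^'m \<Rightarrow> real^'n) \<Rightarrow> (real^'n \<Rightarrow> real^'d^'n) \<Rightarrow>
   (real^'n \<Rightarrow> ((real^'n) \<Rightarrow>\<^sub>L (real^'d^'n))) \<Rightarrow> (real^'n \<Rightarrow> real^'m \<Rightarrow> real^'m) \<Rightarrow>
   real^'n \<Rightarrow> real^'m \<Rightarrow> real \<Rightarrow> (real \<Rightarrow> real^'n) \<Rightarrow> (real \<Rightarrow> real^'m) \<Rightarrow> bool" where
  "solves_slow_fast T w1 W1 w2 f h Dh g X0 Y0 \<epsilon> X Y \<longleftrightarrow>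
     continuous_on {0..T} X \<and> continuous_on {0..T} Y \<and>
     (\<forall>t\<in>{0..T}. (\<lambda>r. f (X r) (Y r)) integrable_on {0..t} \<and>
        has_rough_integral w1 W1 (\<lambda>r. h (X r)) (\<lambda>r. gub_deriv h Dh (X r)) 0 t
          (X t - X0 - integral {0..t} (\<lambda>r. f (X r) (Y r)))) \<and>
     (\<forall>t\<in>{0..T}. (\<lambda>r. g (X r) (Y r)) integrable_on {0..t} \<and>
        Y t = Y0 + (1 / \<epsilon>) *\<^sub>R integral {0..t} (\<lambda>r. g (X r) (Y r)) + w2 (t / \<epsilon>))"

definition sol_remainder ::
  "(real \<Rightarrow> real^'d) \<Rightarrow> (real^'n \<Rightarrow> real^'d^'n) \<Rightarrow> (real \<Rightarrow> real^'n) \<Rightarrow> real \<Rightarrow> real \<Rightarrow> real^'n" where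
  "sol_remainder w h X s t = X t - X s - h (X s) *v (w t - w s)"

end

theory Submission
  imports Defs
begin


lemma mv_norm_le:
  fixes A :: "real^'n^'m"
  shows "norm (A *v x) \<le> real CARD('m) * real CARD('n) * norm A * norm x"
proof -
  have "onorm ((*v) A) \<le> real CARD('m) * real CARD('n) * norm A"
    proof (rule onorm_le_matrix_component)
    fix i j show "\<bar>A $ i $ j\<bar> \<le> norm A"
      using component_le_norm_cart[of "A$i" j] Finite_Cartesian_Product.norm_nth_le[of A i] by linarith
  qed
  moreover have "norm (A *v x) \<le> onorm ((*v) A) * norm x"
    by (rule onorm) simp
  ultimately show ?thesis by (meson mult_right_mono norm_ge_zero order_trans)
qed

lemma powr_add_ge:
  fixes a b r :: real
  assumes "0 \<le> a" "0 \<le> b" "1 \<le> r"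
  shows "a powr r + b powr r \<le> (a + b) powr r"
proof (cases "a + b = 0")
  case True
  then have "a = 0" "b = 0" using assms by auto
  then show ?thesis by simp
next
  case False
  define S where "S = a + b"
  have S: "0 < S" using False assms unfolding S_def by auto
  have a1: "(a/S) powr r \<le> a/S"
  proof (cases "a = 0")
    case True then show ?thesis by simp
  next
    case False then show ?thesis using assms S by (intro powr_le_one_le) (auto simp: S_def)
  qed
  have b1: "(b/S) powr r \<le> b/S"
  proof (cases "b = 0")
    case True then show ?thesis by simp
  next
    case False then show ?thesis using assms S by (intro powr_le_one_le) (auto simp: S_def)
  qed
  have "a powr r = S powr r * (a/S) powr r" using S assms
    by (simp add: powr_divide)
  moreover have "b powr r = S powr r * (b/S) powr r" using S assms
    by (simp add: powr_divide)
  moreover have "S powr r * (a/S) powr r \<le> S powr r * (a/S)" by (rule mult_left_mono[OF a1]) simp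
  moreover have "S powr r * (b/S) powr r \<le> S powr r * (b/S)" by (rule mult_left_mono[OF b1]) simp
  ultimately have "a powr r + b powr r \<le> S powr r * (a/S) + S powr r * (b/S)"
    by linarith
  also have "\<dots> = S powr r * ((a + b)/S)" by (simp add: add_divide_distrib distrib_left)
  also have "\<dots> = S powr r" using S by (simp add: S_def)
  finally show ?thesis by (simp add: S_def)
qed

lemma sum_powr_le:
  fixes f :: "'a \<Rightarrow> real"
  assumes "finite A" "\<And>i. i \<in> A \<Longrightarrow> 0 \<le> f i" "1 \<le> r"
  shows "(\<Sum>i\<in>A. f i powr r) \<le> (\<Sum>i\<in>A. f i) powr r"
  using assms
proof (induction A rule: finite_induct)
  case empty then show ?case by simp
next
  case (insert x F)
  have "(\<Sum>i\<in>insert x F. f i powr r) = f x powr r + (\<Sum>i\<in>F. f i powr r)"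
    using insert by simp
  also have "\<dots> \<le> f x powr r + (\<Sum>i\<in>F. f i) powr r"
    using insert by simp
  also have "\<dots> \<le> (f x + (\<Sum>i\<in>F. f i)) powr r"
    using insert by (intro powr_add_ge) (auto intro: sum_nonneg)
  finally show ?case using insert by simp
qed

lemma powr_add_le2:
  fixes a b q :: real
  assumes "0 \<le> a" "0 \<le> b" "0 \<le> q"
  shows "(a + b) powr q \<le> 2 powr q * (a powr q + b powr q)"
proof -
  have "(a + b) powr q \<le> (2 * max a b) powr q"
    using assms by (intro powr_mono2) auto
  also have "\<dots> = 2 powr q * (max a b) powr q"
    using assms by (simp add: powr_mult)
  also have "\<dots> \<le> 2 powr q * (a powr q + b powr q)"
    by (intro mult_left_mono) (auto simp: max_def)
  finally show ?thesis .
qed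

lemma partition_mono:
  assumes "is_partition u k s t" "i \<le> j" "j \<le> k"
  shows "u i \<le> u j"
  using assms(2,3)
proof (induction j)
  case 0 then show ?case by simp
next
  case (Suc j)
  show ?case
  proof (cases "i = Suc j")
    case True then show ?thesis by simp
  next
    case False
    then have "u i \<le> u j" using Suc by simp
    also have "u j \<le> u (Suc j)" using assms(1) Suc.prems unfolding is_partition_def
      by (simp add: less_imp_le)
    finally show ?thesis .
  qed
qed

lemma partition_range:
  assumes "is_partition u k s t" "i < k"
  shows "s \<le> u i" "u i < u (Suc i)" "u (Suc i) \<le> t"
proof -
  show "s \<le> u i" using partition_mono[OF assms(1), of 0 i] assms by (simp add: is_partition_def)
  show "u i < u (Suc i)" using assms by (simp add: is_partition_def)
  show "u (Suc i) \<le> t" using partition_mono[OF assms(1), of "Suc i" k] assms by (simp add: is_partition_def)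
qed

lemma partition_telescope:
  "is_partition u k s t \<Longrightarrow> (\<Sum>i<k. u (Suc i) - u i) = t - s"
  by (simp add: is_partition_def sum_lessThan_telescope)

lemma trivial_partition: "s < t \<Longrightarrow> is_partition (\<lambda>i. if i = 0 then s else t) 1 s t"
  by (simp add: is_partition_def)

lemma qvar2_sums_nonempty:
  "s < t \<Longrightarrow> norm (R s t) powr q \<in> qvar2_sums R q s t"
  unfolding qvar2_sums_def
  by (rule CollectI, rule exI[of _ "\<lambda>i. if i = 0 then s else t"], rule exI[of _ 1])
     (simp add: is_partition_def)

lemma qvar2_sums_nonneg: "x \<in> qvar2_sums R q s t \<Longrightarrow> 0 \<le> x"
  unfolding qvar2_sums_def by (auto intro: sum_nonneg)

lemma Sup_qvar2_nonneg:
  assumes "s < t" "finite_qvar2 R q s t"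
  shows "0 \<le> Sup (qvar2_sums R q s t)"
proof -
  have "0 \<le> norm (R s t) powr q" by simp
  also have "\<dots> \<le> Sup (qvar2_sums R q s t)"
    using assms by (intro cSup_upper qvar2_sums_nonempty) (auto simp: finite_qvar2_def)
  finally show ?thesis .
qed

lemma pvar_as_qvar2:
  "pvar_sums x p s t = qvar2_sums (\<lambda>a b. x b - x a) p s t"
  "finite_pvar x p s t = finite_qvar2 (\<lambda>a b. x b - x a) p s t"
  "pvar x p s t = qvar2 (\<lambda>a b. x b - x a) p s t"
  by (simp_all add: pvar_sums_def qvar2_sums_def finite_pvar_def finite_qvar2_def pvar_def qvar2_def)



lemma qvar2_holder:
  fixes R :: "real \<Rightarrow> real \<Rightarrow> 'a::real_normed_vector"
  assumes st: "s < t" and q: "0 < q" and qb: "1 \<le> q * \<beta>" and c: "0 \<le> c"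
   and H: "\<And>a b. s \<le> a \<Longrightarrow> a < b \<Longrightarrow> b \<le> t \<Longrightarrow> norm (R a b) \<le> c * (b - a) powr \<beta>"
  shows "finite_qvar2 R q s t \<and> qvar2 R q s t \<le> c * (t - s) powr \<beta>"
proof -
  define B where "B = c powr q * (t - s) powr (\<beta> * q)"
  have le: "x \<le> B" if xin: "x \<in> qvar2_sums R q s t" for x
  proof -
    obtain u k where uk: "is_partition u k s t" and x: "x = (\<Sum>i<k. norm (R (u i) (u (Suc i))) powr q)"
      using xin unfolding qvar2_sums_def by blast
    have "x \<le> (\<Sum>i<k. c powr q * (u (Suc i) - u i) powr (\<beta> * q))"
      unfolding x
    proof (rule sum_mono)
      fix i assume "i \<in> {..<k}"
      then have r: "s \<le> u i" "u i < u (Suc i)" "u (Suc i) \<le> t" using partition_range[OF uk] by auto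
      have "norm (R (u i) (u (Suc i))) powr q \<le> (c * (u (Suc i) - u i) powr \<beta>) powr q"
        using H[OF r] q by (intro powr_mono2) auto
      also have "\<dots> = c powr q * (u (Suc i) - u i) powr (\<beta> * q)"
        using c r by (simp add: powr_mult powr_powr)
      finally show "norm (R (u i) (u (Suc i))) powr q \<le> c powr q * (u (Suc i) - u i) powr (\<beta> * q)" .
    qed
    also have "\<dots> = c powr q * (\<Sum>i<k. (u (Suc i) - u i) powr (\<beta> * q))"
      by (simp add: sum_distrib_left)
    also have "\<dots> \<le> c powr q * (\<Sum>i<k. (u (Suc i) - u i)) powr (\<beta> * q)"
      using partition_range[OF uk] qb
      by (intro mult_left_mono sum_powr_le) (auto simp: less_imp_le mult.commute)
    also have "\<dots> = B" unfolding B_def partition_telescope[OF uk] ..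
    finally show ?thesis .
  qed
  have bdd: "finite_qvar2 R q s t" unfolding finite_qvar2_def bdd_above_def using le by blast
  have ne: "qvar2_sums R q s t \<noteq> {}" using qvar2_sums_nonempty[OF st] by blast
  have "Sup (qvar2_sums R q s t) \<le> B" using le ne by (intro cSup_least) auto
  then have "qvar2 R q s t \<le> B powr (1/q)"
    unfolding qvar2_def using q Sup_qvar2_nonneg[OF st bdd] by (intro powr_mono2) auto
  also have "\<dots> = c * (t - s) powr \<beta>"
    unfolding B_def using c st q by (simp add: powr_mult powr_powr)
  finally show ?thesis using bdd by simp
qed

lemma partition_extend_left:
  fixes F :: "real \<Rightarrow> real \<Rightarrow> real"
  assumes "is_partition u k s t" "a \<le> s" "\<And>x y. 0 \<le> F x y"
  shows "\<exists>v m. is_partition v m a t \<and> (\<Sum>i<k. F (u i) (u (Suc i))) \<le> (\<Sum>i<m. F (v i) (v (Suc i)))"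
proof (cases "a = s")
  case True then show ?thesis using assms(1) by (intro exI[of _ u] exI[of _ k]) auto
next
  case False
  define v where "v i = (if i = 0 then a else u (i - 1))" for i
  have "is_partition v (Suc k) a t"
    using assms False unfolding is_partition_def v_def
    by (auto simp: less_Suc_eq_0_disj)
  moreover have "(\<Sum>i<Suc k. F (v i) (v (Suc i))) = F a s + (\<Sum>i<k. F (u i) (u (Suc i)))"
    unfolding sum.lessThan_Suc_shift using assms(1) by (simp add: v_def is_partition_def)
  ultimately show ?thesis using assms(3)[of a s] by (intro exI[of _ v] exI[of _ "Suc k"]) auto
qed

lemma partition_extend_right:
  fixes F :: "real \<Rightarrow> real \<Rightarrow> real"
  assumes "is_partition u k s t" "t \<le> b" "\<And>x y. 0 \<le> F x y"
  shows "\<exists>v m. is_partition v m s b \<and> (\<Sum>i<k. F (u i) (u (Suc i))) \<le> (\<Sum>i<m. F (v i) (v (Suc i)))"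
proof (cases "t = b")
  case True then show ?thesis using assms(1) by (intro exI[of _ u] exI[of _ k]) auto
next
  case False
  define v where "v i = (if i \<le> k then u i else b)" for i
  have "is_partition v (Suc k) s b"
    using assms False unfolding is_partition_def v_def
    by (auto simp: less_Suc_eq)
  moreover have "(\<Sum>i<Suc k. F (v i) (v (Suc i))) = (\<Sum>i<k. F (u i) (u (Suc i))) + F t b"
    using assms(1) by (simp add: v_def is_partition_def)
  ultimately show ?thesis using assms(3)[of t b] by (intro exI[of _ v] exI[of _ "Suc k"]) auto
qed

lemma qvar2_sub_le:
  assumes "is_partition u k s t" "0 \<le> s" "t \<le> T" "finite_qvar2 R q 0 T"
  shows "(\<Sum>i<k. norm (R (u i) (u (Suc i))) powr q) \<le> Sup (qvar2_sums R q 0 T)"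
proof -
  obtain v m where vm: "is_partition v m 0 t"
    "(\<Sum>i<k. norm (R (u i) (u (Suc i))) powr q) \<le> (\<Sum>i<m. norm (R (v i) (v (Suc i))) powr q)"
    using partition_extend_left[OF assms(1,2), of "\<lambda>x y. norm (R x y) powr q"] by auto
  obtain w n where wn: "is_partition w n 0 T"
    "(\<Sum>i<m. norm (R (v i) (v (Suc i))) powr q) \<le> (\<Sum>i<n. norm (R (w i) (w (Suc i))) powr q)"
    using partition_extend_right[OF vm(1) assms(3), of "\<lambda>x y. norm (R x y) powr q"] by auto
  have "(\<Sum>i<n. norm (R (w i) (w (Suc i))) powr q) \<in> qvar2_sums R q 0 T"
    unfolding qvar2_sums_def using wn(1) by blast
  then have "(\<Sum>i<n. norm (R (w i) (w (Suc i))) powr q) \<le> Sup (qvar2_sums R q 0 T)"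
    using assms(4) by (intro cSup_upper) (auto simp: finite_qvar2_def)
  then show ?thesis using vm wn by linarith
qed

lemma qvar2_compare:
  fixes R :: "real \<Rightarrow> real \<Rightarrow> 'a::real_normed_vector"
    and R1 :: "real \<Rightarrow> real \<Rightarrow> 'b::real_normed_vector"
    and R2 :: "real \<Rightarrow> real \<Rightarrow> 'c::real_normed_vector"
  assumes st: "0 \<le> s" "s < t" "t \<le> T" and K: "0 \<le> K1" "0 \<le> K2"
   and f1: "finite_qvar2 R1 q1 0 T" and f2: "finite_qvar2 R2 q2 0 T"
   and H: "\<And>a b. s \<le> a \<Longrightarrow> a < b \<Longrightarrow> b \<le> t \<Longrightarrow>
      norm (R a b) powr q \<le> K1 * norm (R1 a b) powr q1 + K2 * norm (R2 a b) powr q2"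
  shows "finite_qvar2 R q s t \<and>
    Sup (qvar2_sums R q s t) \<le> K1 * Sup (qvar2_sums R1 q1 0 T) + K2 * Sup (qvar2_sums R2 q2 0 T)"
proof -
  define B where "B = K1 * Sup (qvar2_sums R1 q1 0 T) + K2 * Sup (qvar2_sums R2 q2 0 T)"
  have le: "x \<le> B" if xin: "x \<in> qvar2_sums R q s t" for x
  proof -
    obtain u k where uk: "is_partition u k s t" and x: "x = (\<Sum>i<k. norm (R (u i) (u (Suc i))) powr q)"
      using xin unfolding qvar2_sums_def by blast
    have "x \<le> (\<Sum>i<k. K1 * norm (R1 (u i) (u (Suc i))) powr q1 + K2 * norm (R2 (u i) (u (Suc i))) powr q2)"
      unfolding x using partition_range[OF uk] by (intro sum_mono H) auto
    also have "\<dots> = K1 * (\<Sum>i<k. norm (R1 (u i) (u (Suc i))) powr q1) + K2 * (\<Sum>i<k. norm (R2 (u i) (u (Suc i))) powr q2)"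
      by (simp add: sum.distrib sum_distrib_left)
    also have "\<dots> \<le> B" unfolding B_def
      using qvar2_sub_le[OF uk st(1,3) f1] qvar2_sub_le[OF uk st(1,3) f2] K
      by (intro add_mono mult_left_mono) auto
    finally show ?thesis .
  qed
  have bdd: "finite_qvar2 R q s t" unfolding finite_qvar2_def bdd_above_def using le by blast
  have ne: "qvar2_sums R q s t \<noteq> {}" using qvar2_sums_nonempty[OF st(2)] by blast
  have "Sup (qvar2_sums R q s t) \<le> B" using le ne by (intro cSup_least) auto
  then show ?thesis using bdd unfolding B_def by simp
qed



lemma rough_int_zero:
  assumes "has_rough_integral w W y y' a a I"
  shows "I = 0"
proof (rule ccontr)
  assume "I \<noteq> 0"
  then have "norm I > 0" by simp
  then obtain \<delta> where "\<delta> > 0" and H: "\<forall>u k. is_partition u k a a \<and> (\<forall>i<k. u (Suc i) - u i < \<delta>) \<longrightarrow>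
        norm ((\<Sum>i<k. y (u i) *v (w (u (Suc i)) - w (u i))
                      + second_order_term (y' (u i)) (W (u i) (u (Suc i)))) - I) < norm I"
    using assms unfolding has_rough_integral_def by blast
  have "is_partition (\<lambda>_. a) 0 a a" by (simp add: is_partition_def)
  from H[rule_format, OF conjI[OF this]] show False by simp
qed

lemma sum_lessThan_add_split:
  fixes f :: "nat \<Rightarrow> 'a::comm_monoid_add" and m k :: nat
  shows   "(\<Sum>i<m+k. f i) = (\<Sum>i<m. f i) + (\<Sum>i<k. f (m+i))"
  by (induction k) (simp_all add: add.assoc)

lemma rough_int_split:
  assumes st: "0 < s" "s < t"
    and It: "has_rough_integral w W y y' 0 t It"
    and Is: "has_rough_integral w W y y' 0 s Is"
  shows "has_rough_integral w W y y' s t (It - Is)"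
  unfolding has_rough_integral_def
proof (intro allI impI)
  fix e :: real assume e: "e > 0"
  define G where "G a b = y a *v (w b - w a) + second_order_term (y' a) (W a b)" for a b
  obtain d1 where d1: "d1 > 0" "\<forall>u k. is_partition u k 0 t \<and> (\<forall>i<k. u (Suc i) - u i < d1) \<longrightarrow>
        norm ((\<Sum>i<k. G (u i) (u (Suc i))) - It) < e/2"
    using It e unfolding has_rough_integral_def G_def by (meson half_gt_zero)
  obtain d2 where d2: "d2 > 0" "\<forall>u k. is_partition u k 0 s \<and> (\<forall>i<k. u (Suc i) - u i < d2) \<longrightarrow>
        norm ((\<Sum>i<k. G (u i) (u (Suc i))) - Is) < e/2"
    using Is e unfolding has_rough_integral_def G_def by (meson half_gt_zero)
  define d where "d = min d1 d2"
  have d: "d > 0" using d1 d2 by (simp add: d_def)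
  obtain m :: nat where m: "s / d < real m" using reals_Archimedean2 by blast
  have m0: "real m > 0" using m st d by (smt (verit) divide_pos_pos)
  have sm: "s / real m < d" using m m0 d st by (simp add: divide_less_eq mult.commute pos_divide_less_eq)
  define v where "v i = s * real i / real m" for i
  have v: "is_partition v m 0 s" unfolding is_partition_def v_def using m0 st
    by (auto simp: divide_strict_right_mono)
  have vstep: "v (Suc i) - v i = s / real m" for i unfolding v_def by (simp add: add_divide_distrib distrib_left)
  have vmesh: "\<forall>i<m. v (Suc i) - v i < d2"
  proof (intro allI impI)
    fix i have "v (Suc i) - v i = s / real m" unfolding v_def by (simp add: add_divide_distrib distrib_left)
    then show "v (Suc i) - v i < d2" using sm d_def by simp
  qed
  show "\<exists>\<delta>>0. \<forall>u k. is_partition u k s t \<and> (\<forall>i<k. u (Suc i) - u i < \<delta>) \<longrightarrow>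
        norm ((\<Sum>i<k. y (u i) *v (w (u (Suc i)) - w (u i))
                      + second_order_term (y' (u i)) (W (u i) (u (Suc i)))) - (It - Is)) < e"
  proof (intro exI[of _ d] conjI allI impI d)
    fix u k assume uk: "is_partition u k s t \<and> (\<forall>i<k. u (Suc i) - u i < d)"
    have k0: "k \<noteq> 0" proof assume "k = 0" then show False using uk st unfolding is_partition_def by auto qed
    define z where "z i = (if i \<le> m then v i else u (i - m))" for i
    have zl: "z i = v i" "z (Suc i) = v (Suc i)" if "i < m" for i using that by (auto simp: z_def)
    have zr: "z (m + i) = u i" "z (Suc (m + i)) = u (Suc i)" for i
      using uk v by (auto simp: z_def is_partition_def)
    have z: "is_partition z (m + k) 0 t"
      unfolding is_partition_def
    proof (intro conjI allI impI)
      show "z 0 = 0" using v by (simp add: z_def is_partition_def)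
      show "z (m + k) = t" using zr(1)[of k] uk by (simp add: is_partition_def)
      fix i assume i: "i < m + k"
      show "z i < z (Suc i)"
      proof (cases "i < m")
        case True then show ?thesis using zl[OF True] v by (simp add: is_partition_def)
      next
        case False
        then obtain j where j: "i = m + j" "j < k" using i by (metis add_less_cancel_left le_Suc_ex not_less)
        then show ?thesis using zr[of j] uk by (simp add: is_partition_def)
      qed
    qed
    have zmesh: "\<forall>i<m+k. z (Suc i) - z i < d1"
    proof (intro allI impI)
      fix i assume i: "i < m + k"
      show "z (Suc i) - z i < d1"
      proof (cases "i < m")
        case True then show ?thesis using zl[OF True] vstep[of i] d_def sm by simp
      next
        case False
        then obtain j where j: "i = m + j" "j < k" using i by (metis add_less_cancel_left le_Suc_ex not_less)
        then show ?thesis using zr[of j] uk d_def by auto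
      qed
    qed
    have sumz: "(\<Sum>i<m+k. G (z i) (z (Suc i))) = (\<Sum>i<m. G (v i) (v (Suc i))) + (\<Sum>i<k. G (u i) (u (Suc i)))"
      unfolding sum_lessThan_add_split using zl zr by simp
    have A: "norm ((\<Sum>i<m+k. G (z i) (z (Suc i))) - It) < e/2" using d1(2) z zmesh by blast
    have B: "norm ((\<Sum>i<m. G (v i) (v (Suc i))) - Is) < e/2" using d2(2) v vmesh by blast
    have "(\<Sum>i<k. G (u i) (u (Suc i))) - (It - Is) =
       ((\<Sum>i<m+k. G (z i) (z (Suc i))) - It) - ((\<Sum>i<m. G (v i) (v (Suc i))) - Is)"
      unfolding sumz by (simp add: algebra_simps)
    then have "norm ((\<Sum>i<k. G (u i) (u (Suc i))) - (It - Is)) \<le>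
       norm ((\<Sum>i<m+k. G (z i) (z (Suc i))) - It) + norm ((\<Sum>i<m. G (v i) (v (Suc i))) - Is)"
      by (simp only: norm_triangle_ineq4)
    then have "norm ((\<Sum>i<k. G (u i) (u (Suc i))) - (It - Is)) < e"
      using A B by linarith
    then show "norm ((\<Sum>i<k. y (u i) *v (w (u (Suc i)) - w (u i))
                      + second_order_term (y' (u i)) (W (u i) (u (Suc i)))) - (It - Is)) < e"
      unfolding G_def .
  qed
qed



lemma range_norm_bound:
  fixes h :: "'a \<Rightarrow> 'b::real_normed_vector"
  assumes "bounded (range h)"
  shows "norm (h x) \<le> (SUP x. norm (h x))"
proof -
  obtain B where "\<forall>y\<in>range h. norm y \<le> B" using assms bounded_iff by blast
  then have "bdd_above (range (\<lambda>x. norm (h x)))" by (auto intro!: bdd_aboveI)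
  then show ?thesis by (intro cSUP_upper) auto
qed

context
  fixes h :: "real^'n \<Rightarrow> real^'d^'n" and Dh D2h D3h
  assumes cb: "Cb3_with h Dh D2h D3h"
begin

lemma cb_h_bound: "norm (h x) \<le> C_h_const h Dh D2h D3h"
  using range_norm_bound[of h x] cb unfolding Cb3_with_def C_h_const_def by linarith

lemma cb_Dh_bound: "norm (Dh x) \<le> C_h_const h Dh D2h D3h"
  using range_norm_bound[of Dh x] cb unfolding Cb3_with_def C_h_const_def by linarith

lemma cb_D2h_bound: "norm (D2h x) \<le> C_h_const h Dh D2h D3h"
  using range_norm_bound[of D2h x] cb unfolding Cb3_with_def C_h_const_def by linarith

lemma cb_Ch_nonneg: "0 \<le> C_h_const h Dh D2h D3h"
  using cb_h_bound[of 0] norm_ge_zero order_trans by blast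

lemma cb_h_lip: "norm (h x - h y) \<le> C_h_const h Dh D2h D3h * norm (x - y)"
proof (rule differentiable_bound[where S = UNIV and f' = "\<lambda>x. blinfun_apply (Dh x)"])
  show "\<And>x. x \<in> UNIV \<Longrightarrow> (h has_derivative blinfun_apply (Dh x)) (at x within UNIV)"
    using cb unfolding Cb3_with_def by auto
  show "\<And>x. x \<in> UNIV \<Longrightarrow> onorm (blinfun_apply (Dh x)) \<le> C_h_const h Dh D2h D3h"
    using cb_Dh_bound by (simp add: norm_blinfun.rep_eq[symmetric])
qed auto

lemma cb_Dh_lip: "norm (Dh x - Dh y) \<le> C_h_const h Dh D2h D3h * norm (x - y)"
proof (rule differentiable_bound[where S = UNIV and f' = "\<lambda>x. blinfun_apply (D2h x)"])
  show "\<And>x. x \<in> UNIV \<Longrightarrow> (Dh has_derivative blinfun_apply (D2h x)) (at x within UNIV)"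
    using cb unfolding Cb3_with_def by auto
  show "\<And>x. x \<in> UNIV \<Longrightarrow> onorm (blinfun_apply (D2h x)) \<le> C_h_const h Dh D2h D3h"
    using cb_D2h_bound by (simp add: norm_blinfun.rep_eq[symmetric])
qed auto

lemma cb_taylor: "norm (h b - h a - blinfun_apply (Dh a) (b - a)) \<le> C_h_const h Dh D2h D3h * norm (b - a)^2"
proof -
  have "norm (h b - h a - blinfun_apply (Dh a) (b - a)) \<le> norm (b - a) * (C_h_const h Dh D2h D3h * norm (b - a))"
  proof (rule differentiable_bound_linearization[where S = "closed_segment a b" and f' = "\<lambda>x. blinfun_apply (Dh x)"])
    show "\<And>t. t \<in> {0..1} \<Longrightarrow> a + t *\<^sub>R (b - a) \<in> closed_segment a b"
      unfolding in_segment by (rule_tac x=t in exI) (auto simp: algebra_simps)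
    show "\<And>x. x \<in> closed_segment a b \<Longrightarrow> (h has_derivative blinfun_apply (Dh x)) (at x within closed_segment a b)"
      using cb unfolding Cb3_with_def by (auto intro: has_derivative_at_withinI)
    show "a \<in> closed_segment a b" by simp
    fix x assume x: "x \<in> closed_segment a b"
    have "onorm (blinfun_apply (Dh x) - blinfun_apply (Dh a)) = norm (Dh x - Dh a)"
      by (simp add: norm_blinfun.rep_eq blinfun.diff_left[abs_def] fun_diff_def minus_blinfun.rep_eq)
    also have "\<dots> \<le> C_h_const h Dh D2h D3h * norm (x - a)" by (rule cb_Dh_lip)
    also have "\<dots> \<le> C_h_const h Dh D2h D3h * norm (b - a)"
      using dist_in_closed_segment[OF x] cb_Ch_nonneg
      by (intro mult_left_mono) (auto simp: dist_norm norm_minus_commute)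
    finally show "onorm (blinfun_apply (Dh x) - blinfun_apply (Dh a)) \<le> C_h_const h Dh D2h D3h * norm (b - a)" .
  qed
  then show ?thesis by (simp add: power2_eq_square mult_ac)
qed

lemma gub_bl: "bounded_linear (\<lambda>v. blinfun_apply (Dh x) (h x *v v))"
  by (rule bounded_linear_compose[OF blinfun.bounded_linear_right matrix_vector_mul_bounded_linear])

lemma gub_apply: "blinfun_apply (gub_deriv h Dh x) v = blinfun_apply (Dh x) (h x *v v)"
  unfolding gub_deriv_def using bounded_linear_Blinfun_apply[OF gub_bl] by simp

lemma gub_norm: "norm (gub_deriv h Dh x) \<le>
   C_h_const h Dh D2h D3h * (real CARD('n) * real CARD('d) * C_h_const h Dh D2h D3h)"
proof (rule norm_blinfun_bound)
  show "0 \<le> C_h_const h Dh D2h D3h * (real CARD('n) * real CARD('d) * C_h_const h Dh D2h D3h)"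
    using cb_Ch_nonneg by simp
  fix v
  have "norm (blinfun_apply (Dh x) (h x *v v)) \<le> norm (Dh x) * norm (h x *v v)"
    by (rule norm_blinfun)
  also have "\<dots> \<le> C_h_const h Dh D2h D3h * (real CARD('n) * real CARD('d) * C_h_const h Dh D2h D3h * norm v)"
  proof (intro mult_mono cb_Dh_bound)
    have "norm (h x *v v) \<le> real CARD('n) * real CARD('d) * norm (h x) * norm v" by (rule mv_norm_le)
    also have "\<dots> \<le> real CARD('n) * real CARD('d) * C_h_const h Dh D2h D3h * norm v"
      by (intro mult_right_mono mult_left_mono cb_h_bound) auto
    finally show "norm (h x *v v) \<le> real CARD('n) * real CARD('d) * C_h_const h Dh D2h D3h * norm v" .
  qed (auto simp: cb_Ch_nonneg)
  finally show "norm (blinfun_apply (gub_deriv h Dh x) v) \<le>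
      C_h_const h Dh D2h D3h * (real CARD('n) * real CARD('d) * C_h_const h Dh D2h D3h) * norm v"
    by (simp add: gub_apply mult_ac)
qed

lemma gub_lip: "norm (gub_deriv h Dh x - gub_deriv h Dh y) \<le>
   2 * C_h_const h Dh D2h D3h * (real CARD('n) * real CARD('d) * C_h_const h Dh D2h D3h) * norm (x - y)"
proof (rule norm_blinfun_bound)
  define Ch where "Ch = C_h_const h Dh D2h D3h"
  define M where "M = real CARD('n) * real CARD('d)"
  have Ch: "0 \<le> Ch" using cb_Ch_nonneg Ch_def by simp
  have M: "0 \<le> M" using M_def by simp
  show "0 \<le> 2 * C_h_const h Dh D2h D3h * (real CARD('n) * real CARD('d) * C_h_const h Dh D2h D3h) * norm (x - y)"
    using cb_Ch_nonneg by simp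
  fix v
  have mv: "norm (A *v v) \<le> M * norm A * norm v" for A :: "real^'d^'n"
    unfolding M_def by (rule mv_norm_le)
  have "blinfun_apply (gub_deriv h Dh x - gub_deriv h Dh y) v =
     blinfun_apply (Dh x - Dh y) (h x *v v) + blinfun_apply (Dh y) ((h x - h y) *v v)"
    by (simp add: gub_apply blinfun.diff_left blinfun.diff_right matrix_vector_mult_diff_rdistrib)
  then have "norm (blinfun_apply (gub_deriv h Dh x - gub_deriv h Dh y) v) \<le>
     norm (blinfun_apply (Dh x - Dh y) (h x *v v)) + norm (blinfun_apply (Dh y) ((h x - h y) *v v))"
    by (simp add: norm_triangle_ineq)
  also have "\<dots> \<le> (Ch * norm (x - y)) * (M * Ch * norm v) + Ch * (M * (Ch * norm (x - y)) * norm v)"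
  proof (intro add_mono order_trans[OF norm_blinfun] mult_mono)
    show "norm (Dh x - Dh y) \<le> Ch * norm (x - y)" unfolding Ch_def by (rule cb_Dh_lip)
    show "norm (Dh y) \<le> Ch" unfolding Ch_def by (rule cb_Dh_bound)
    show "norm (h x *v v) \<le> M * Ch * norm v"
      using mv[of "h x"] cb_h_bound[of x] M by (smt (verit) Ch_def mult_right_mono norm_ge_zero mult_left_mono)
    show "norm ((h x - h y) *v v) \<le> M * (Ch * norm (x - y)) * norm v"
      using mv[of "h x - h y"] cb_h_lip[of x y] M by (smt (verit) Ch_def mult_right_mono norm_ge_zero mult_left_mono)
  qed (use Ch M in auto)
  also have "\<dots> = 2 * Ch * (M * Ch) * norm (x - y) * norm v" by (simp add: algebra_simps)
  finally show "norm (blinfun_apply (gub_deriv h Dh x - gub_deriv h Dh y) v) \<le>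
     2 * C_h_const h Dh D2h D3h * (real CARD('n) * real CARD('d) * C_h_const h Dh D2h D3h) * norm (x - y) * norm v"
    unfolding Ch_def M_def .
qed

end



lemma sot_bound:
  fixes A :: "(real^'d) \<Rightarrow>\<^sub>L (real^'d^'n)" and V :: "real^'d^'d"
  shows "norm (second_order_term A V) \<le>
    real CARD('d) * real CARD('d) * (real CARD('n) * real CARD('d) * norm A * norm V)"
proof -
  have "norm (second_order_term A V) \<le> (\<Sum>i\<in>UNIV. \<Sum>j\<in>UNIV. norm (V $ i $ j *\<^sub>R (blinfun_apply A (axis i 1) *v axis j 1)))"
    unfolding second_order_term_def by (rule order_trans[OF norm_sum sum_mono[OF norm_sum]])
  also have "\<dots> \<le> (\<Sum>i\<in>(UNIV::'d set). \<Sum>j\<in>(UNIV::'d set). real CARD('n) * real CARD('d) * norm A * norm V)"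
  proof (intro sum_mono)
    fix i j :: 'd
    have a: "\<bar>V$i$j\<bar> \<le> norm V"
      using component_le_norm_cart[of "V$i" j] Finite_Cartesian_Product.norm_nth_le[of V i] by simp
    have "norm (blinfun_apply A (axis i 1) *v axis j 1) \<le> real CARD('n) * real CARD('d) * norm (blinfun_apply A (axis i 1)) * norm (axis j (1::real))"
      by (rule mv_norm_le)
    also have "\<dots> \<le> real CARD('n) * real CARD('d) * norm A"
      using norm_blinfun[of A "axis i 1"] by (simp add: mult_left_mono)
    finally have b: "norm (blinfun_apply A (axis i 1) *v axis j 1) \<le> real CARD('n) * real CARD('d) * norm A" .
    show "norm (V $ i $ j *\<^sub>R (blinfun_apply A (axis i 1) *v axis j 1)) \<le> real CARD('n) * real CARD('d) * norm A * norm V"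
      using mult_mono[OF a b] by (simp add: mult_ac)
  qed
  also have "\<dots> = real CARD('d) * real CARD('d) * (real CARD('n) * real CARD('d) * norm A * norm V)"
    by simp
  finally show ?thesis .
qed

lemma holder1_bound:
  assumes "bdd_above (holder1_set w \<gamma> a b)" "a \<le> s" "s < t" "t \<le> b"
  shows "norm (w t - w s) \<le> Sup (holder1_set w \<gamma> a b) * (t - s) powr \<gamma>"
proof -
  have "norm (w t - w s) / (t - s) powr \<gamma> \<in> holder1_set w \<gamma> a b"
    unfolding holder1_set_def using assms by blast
  then have "norm (w t - w s) / (t - s) powr \<gamma> \<le> Sup (holder1_set w \<gamma> a b)"
    using assms(1) by (rule cSup_upper)
  then show ?thesis using assms by (simp add: divide_le_eq)
qed

lemma holder2_bound:
  assumes "bdd_above (holder2_set W \<gamma> a b)" "a \<le> s" "s < t" "t \<le> b"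
  shows "norm (W s t) \<le> Sup (holder2_set W \<gamma> a b) * (t - s) powr (2 * \<gamma>)"
proof -
  have "norm (W s t) / (t - s) powr (2 * \<gamma>) \<in> holder2_set W \<gamma> a b"
    unfolding holder2_set_def using assms by blast
  then have "norm (W s t) / (t - s) powr (2 * \<gamma>) \<le> Sup (holder2_set W \<gamma> a b)"
    using assms(1) by (rule cSup_upper)
  then show ?thesis using assms by (simp add: divide_le_eq)
qed

lemma holder1_Sup_nonneg:
  assumes "bdd_above (holder1_set w \<gamma> a b)" "a < b"
  shows "0 \<le> Sup (holder1_set w \<gamma> a b)"
proof -
  have "norm (w b - w a) / (b - a) powr \<gamma> \<in> holder1_set w \<gamma> a b"
    unfolding holder1_set_def using assms by blast
  then have "norm (w b - w a) / (b - a) powr \<gamma> \<le> Sup (holder1_set w \<gamma> a b)"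
    using assms(1) by (rule cSup_upper)
  moreover have "0 \<le> norm (w b - w a) / (b - a) powr \<gamma>" by simp
  ultimately show ?thesis by linarith
qed

lemma holder2_Sup_nonneg:
  assumes "bdd_above (holder2_set W \<gamma> a b)" "a < b"
  shows "0 \<le> Sup (holder2_set W \<gamma> a b)"
proof -
  have "norm (W a b) / (b - a) powr (2 * \<gamma>) \<in> holder2_set W \<gamma> a b"
    unfolding holder2_set_def using assms by blast
  then have "norm (W a b) / (b - a) powr (2 * \<gamma>) \<le> Sup (holder2_set W \<gamma> a b)"
    using assms(1) by (rule cSup_upper)
  moreover have "0 \<le> norm (W a b) / (b - a) powr (2 * \<gamma>)" by simp
  ultimately show ?thesis by linarith
qed

lemma supnorm_nonneg:
  fixes x :: "real \<Rightarrow> 'a::real_normed_vector"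
  assumes "continuous_on {a..b} x" "a \<le> b"
  shows "0 \<le> supnorm x a b"
proof -
  have "compact (x ` {a..b})" using assms by (intro compact_continuous_image) auto
  then obtain B where B: "\<forall>y\<in>x ` {a..b}. norm y \<le> B" using compact_imp_bounded bounded_iff by metis
  have bdd: "bdd_above ((\<lambda>t. norm (x t)) ` {a..b})" using B by (auto intro!: bdd_aboveI)
  have "norm (x a) \<le> supnorm x a b" unfolding supnorm_def using assms bdd by (intro cSup_upper) auto
  then show ?thesis using norm_ge_zero order_trans by blast
qed

lemma sq_powr: "0 \<le> (x::real) \<Longrightarrow> (x^2) powr q = x powr (2 * q)"
proof (cases "x = 0")
  case False
  assume "0 \<le> x"
  then have "x > 0" using False by simp
  then have "x^2 = x powr 2" using powr_realpow[of x 2] by simp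
  then show ?thesis by (simp add: powr_powr)
qed simp

lemma powr_inv_powr: "0 \<le> (x::real) \<Longrightarrow> 0 < p \<Longrightarrow> (x powr (1/p)) powr p = x"
  by (simp add: powr_powr powr_one)



definition Kc :: "real \<Rightarrow> real \<Rightarrow> real \<Rightarrow> real \<Rightarrow> real \<Rightarrow> real \<Rightarrow> real \<Rightarrow> real \<Rightarrow> real \<Rightarrow> real \<Rightarrow> real \<Rightarrow> real" where
  "Kc T \<gamma> p q D M c1 cp ch mf n =
     mf * T powr (1 - \<gamma>) + M * ch * n + D * D * (M * (ch * (M * ch))) * n^2 * T powr \<gamma>
     + cp * (n * ((2 powr q * ch powr q) * c1 powr p + (2 powr q * ch powr q) * c1 powr q) powr (1/q)
             + ((2 * ch * (M * ch)) powr p * c1 powr p) powr (1/p) * n^2 * T powr \<gamma>)"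

lemma main_bound:
  fixes T p q \<gamma> :: real
    and w1 :: "real \<Rightarrow> real^'d1" and W1 and w2 :: "real \<Rightarrow> real^'m"
    and f :: "real^'n \<Rightarrow> real^'m \<Rightarrow> real^'n" and h :: "real^'n \<Rightarrow> real^'d1^'n" and Dh D2h D3h
    and g :: "real^'n \<Rightarrow> real^'m \<Rightarrow> real^'m" and X0 Y0
    and Xe :: "real \<Rightarrow> real^'n" and Ye :: "real \<Rightarrow> real^'m"
  assumes T0: "0 < T" and p0: "0 < p" and g0: "0 < \<gamma>" and g1: "\<gamma> < 1" and pg: "1 \<le> p * \<gamma>"
    and qp: "q = p / 2"
    and geo: "geometric_holder_rough_path w1 W1 \<gamma> 0 T"
    and cb: "Cb3_with h Dh D2h D3h"
    and fb: "bounded (range (\<lambda>z. f (fst z) (snd z)))"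
    and Mf: "Mf = (SUP z. norm (f (fst z) (snd z)))"
    and solves: "solves_slow_fast T w1 W1 w2 f h Dh g X0 Y0 \<epsilon> Xe Ye"
    and fpX: "finite_pvar Xe p 0 T" and fqR: "finite_qvar2 (sol_remainder w1 h Xe) q 0 T"
    and C1: "supnorm Xe 0 T + pvar Xe p 0 T + qvar2 (sol_remainder w1 h Xe) q 0 T \<le> C1"
    and Cp: "Cp > 1" and sew: "sewing_constant Cp w1 W1 p T TYPE('n)"
    and s0: "0 \<le> s" and st: "s < t" and tT: "t \<le> T"
  shows "norm (Xe t - Xe s) \<le> Kc T \<gamma> p q (real CARD('d1)) (real CARD('n) * real CARD('d1))
            C1 Cp (C_h_const h Dh D2h D3h) Mf (rp_holder_norm w1 W1 \<gamma> 0 T) * (t - s) powr \<gamma>"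
proof -
  define N1 where "N1 = Sup (holder1_set w1 \<gamma> 0 T)"
  define N2 where "N2 = Sup (holder2_set W1 \<gamma> 0 T)"
  define n where "n = rp_holder_norm w1 W1 \<gamma> 0 T"
  define ch where "ch = C_h_const h Dh D2h D3h"
  define D where "D = real CARD('d1)"
  define M where "M = real CARD('n) * real CARD('d1)"
  define \<tau> where "\<tau> = (t - s) powr \<gamma>"
  have q0: "0 < q" using p0 qp by simp
  have b1: "bdd_above (holder1_set w1 \<gamma> 0 T)" and b2: "bdd_above (holder2_set W1 \<gamma> 0 T)"
    using geo unfolding geometric_holder_rough_path_def by auto
  have N1: "0 \<le> N1" using holder1_Sup_nonneg[OF b1 T0] N1_def by simp
  have N2: "0 \<le> N2" using holder2_Sup_nonneg[OF b2 T0] N2_def by simp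
  have n_eq: "n = N1 + sqrt N2" by (simp add: n_def N1_def N2_def rp_holder_norm_def)
  have N1n: "N1 \<le> n" using N2 by (simp add: n_eq)
  have sqn: "sqrt N2 \<le> n" using N1 by (simp add: n_eq)
  have N2n: "N2 \<le> n^2"
  proof -
    have "(sqrt N2)^2 \<le> n^2" using sqn N2 by (intro power_mono) auto
    then show ?thesis using N2 by simp
  qed
  have n0: "0 \<le> n" using N1 N1n by linarith
  have M0: "0 \<le> M" unfolding M_def by simp
  have ch0: "0 \<le> ch" using cb_Ch_nonneg[OF cb] ch_def by simp
  have \<tau>0: "0 < \<tau>" unfolding \<tau>_def using st by simp
  have ts1: "t - s \<le> T powr (1 - \<gamma>) * \<tau>"
  proof -
    have "t - s = (t - s) powr ((1 - \<gamma>) + \<gamma>)" using st by simp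
    also have "\<dots> = (t - s) powr (1 - \<gamma>) * \<tau>" unfolding \<tau>_def by (rule powr_add)
    also have "\<dots> \<le> T powr (1 - \<gamma>) * \<tau>" using st s0 tT g1 \<tau>0
      by (intro mult_right_mono powr_mono2) auto
    finally show ?thesis .
  qed
  have ts2: "(t - s) powr (2 * \<gamma>) \<le> T powr \<gamma> * \<tau>"
  proof -
    have "(t - s) powr (2 * \<gamma>) = (t - s) powr (\<gamma> + \<gamma>)" by simp
    also have "\<dots> = (t - s) powr \<gamma> * \<tau>" unfolding \<tau>_def by (rule powr_add)
    also have "\<dots> \<le> T powr \<gamma> * \<tau>" using st s0 tT g0 \<tau>0
      by (intro mult_right_mono powr_mono2) auto
    finally show ?thesis .
  qed

  define F where "F = (\<lambda>r. f (Xe r) (Ye r))"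
  define y where "y = (\<lambda>r. h (Xe r))"
  define y' where "y' = (\<lambda>r. gub_deriv h Dh (Xe r))"
  define Ist where "Ist = Xe t - Xe s - integral {s..t} F"
  have sol: "F integrable_on {0..r} \<and> has_rough_integral w1 W1 y y' 0 r (Xe r - X0 - integral {0..r} F)"
    if "r \<in> {0..T}" for r
    using solves that unfolding solves_slow_fast_def F_def y_def y'_def by blast
  have intt: "F integrable_on {0..t}" using sol[of t] s0 st tT by auto
  have Fst: "F integrable_on {s..t}" by (rule integrable_on_subinterval[OF intt]) (use s0 in auto)
  have comb: "integral {0..s} F + integral {s..t} F = integral {0..t} F"
    by (rule Henstock_Kurzweil_Integration.integral_combine) (use intt s0 st in auto)
  have Xe0: "Xe 0 = X0"
  proof -
    have "has_rough_integral w1 W1 y y' 0 0 (Xe 0 - X0 - integral {0..0} F)" using sol[of 0] T0 by auto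
    then have "Xe 0 - X0 - integral {0..0} F = 0" by (rule rough_int_zero)
    then show ?thesis by simp
  qed
  have Iint: "has_rough_integral w1 W1 y y' s t Ist"
  proof (cases "s = 0")
    case True
    then show ?thesis using sol[of t] st tT Xe0 unfolding Ist_def by auto
  next
    case False
    then have s0': "0 < s" using s0 by simp
    have "has_rough_integral w1 W1 y y' s t
       ((Xe t - X0 - integral {0..t} F) - (Xe s - X0 - integral {0..s} F))"
    proof (rule rough_int_split[OF s0' st])
      show "has_rough_integral w1 W1 y y' 0 t (Xe t - X0 - integral {0..t} F)" using sol[of t] s0 st tT by auto
      show "has_rough_integral w1 W1 y y' 0 s (Xe s - X0 - integral {0..s} F)" using sol[of s] s0 st tT by auto
    qed
    moreover have "(Xe t - X0 - integral {0..t} F) - (Xe s - X0 - integral {0..s} F) = Ist"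
      unfolding Ist_def comb[symmetric] by (simp add: algebra_simps)
    ultimately show ?thesis by simp
  qed

  define SX where "SX = Sup (qvar2_sums (\<lambda>a b. Xe b - Xe a) p 0 T)"
  define SR where "SR = Sup (qvar2_sums (sol_remainder w1 h Xe) q 0 T)"
  have fX: "finite_qvar2 (\<lambda>a b. Xe b - Xe a) p 0 T" using fpX by (simp add: pvar_as_qvar2)
  have SX0: "0 \<le> SX" unfolding SX_def by (rule Sup_qvar2_nonneg[OF T0 fX])
  have SR0: "0 \<le> SR" unfolding SR_def by (rule Sup_qvar2_nonneg[OF T0 fqR])
  have sup0: "0 \<le> supnorm Xe 0 T"
    using solves T0 unfolding solves_slow_fast_def by (intro supnorm_nonneg) auto
  have pvX: "pvar Xe p 0 T = SX powr (1/p)" by (simp add: pvar_as_qvar2 qvar2_def SX_def)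
  have qvR: "qvar2 (sol_remainder w1 h Xe) q 0 T = SR powr (1/q)" by (simp add: qvar2_def SR_def)
  have pC1: "SX powr (1/p) \<le> C1" using C1 sup0 pvX qvR by (smt (verit) powr_ge_zero)
  have qC1: "SR powr (1/q) \<le> C1" using C1 sup0 pvX qvR by (smt (verit) powr_ge_zero)
  have SXC: "SX \<le> C1 powr p"
  proof -
    have "SX = (SX powr (1/p)) powr p" using SX0 p0 by (simp add: powr_inv_powr)
    also have "\<dots> \<le> C1 powr p" using pC1 p0 by (intro powr_mono2) auto
    finally show ?thesis .
  qed
  have SRC: "SR \<le> C1 powr q"
  proof -
    have "SR = (SR powr (1/q)) powr q" using SR0 q0 by (simp add: powr_inv_powr)
    also have "\<dots> \<le> C1 powr q" using qC1 q0 by (intro powr_mono2) auto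
    finally show ?thesis .
  qed

  define L where "L = 2 * ch * (M * ch)"
  have L0: "0 \<le> L" unfolding L_def using ch0 M0 by simp
  have gl: "norm (y' b - y' a) \<le> L * norm (Xe b - Xe a)" for a b
    using gub_lip[OF cb, of "Xe b" "Xe a"] unfolding y'_def L_def ch_def M_def by simp
  have Y'c: "finite_qvar2 (\<lambda>a b. y' b - y' a) p s t \<and>
      Sup (qvar2_sums (\<lambda>a b. y' b - y' a) p s t) \<le> L powr p * SX + 0 * SX"
    unfolding SX_def
  proof (rule qvar2_compare[OF s0 st tT _ _ fX fX])
    fix a b :: real
    have "norm (y' b - y' a) powr p \<le> (L * norm (Xe b - Xe a)) powr p"
      using gl p0 by (intro powr_mono2) auto
    also have "\<dots> = L powr p * norm (Xe b - Xe a) powr p" using L0 by (simp add: powr_mult)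
    finally show "norm (y' b - y' a) powr p \<le> L powr p * norm (Xe b - Xe a) powr p + 0 * norm (Xe b - Xe a) powr p"
      by simp
  qed (auto)
  define P where "P = (L powr p * C1 powr p) powr (1/p)"
  have P0: "0 \<le> P" unfolding P_def by simp
  have fy': "finite_pvar y' p s t" using Y'c by (simp add: pvar_as_qvar2)
  have Py': "pvar y' p s t \<le> P"
  proof -
    have "pvar y' p s t = (Sup (qvar2_sums (\<lambda>a b. y' b - y' a) p s t)) powr (1/p)"
      by (simp add: pvar_as_qvar2 qvar2_def)
    also have "\<dots> \<le> P" unfolding P_def
    proof (intro powr_mono2)
      have "L powr p * SX \<le> L powr p * C1 powr p" using SXC by (intro mult_left_mono) auto
      then show "Sup (qvar2_sums (\<lambda>a b. y' b - y' a) p s t) \<le> L powr p * C1 powr p" using Y'c by simp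
      show "0 \<le> Sup (qvar2_sums (\<lambda>a b. y' b - y' a) p s t)"
        using Y'c Sup_qvar2_nonneg[OF st, of "\<lambda>a b. y' b - y' a" p] by simp
    qed (use p0 in auto)
    finally show ?thesis .
  qed

  have Ry_eq: "ctrl_remainder w1 y y' a b = (h (Xe b) - h (Xe a) - blinfun_apply (Dh (Xe a)) (Xe b - Xe a))
      + blinfun_apply (Dh (Xe a)) (sol_remainder w1 h Xe a b)" for a b
    unfolding ctrl_remainder_def sol_remainder_def y_def y'_def
    by (simp add: gub_apply[OF cb] blinfun.diff_right matrix_vector_mult_diff_distrib)
  have Ry_le: "norm (ctrl_remainder w1 y y' a b) \<le> ch * norm (Xe b - Xe a)^2 + ch * norm (sol_remainder w1 h Xe a b)" for a b
  proof -
    have "norm (ctrl_remainder w1 y y' a b) \<le> norm (h (Xe b) - h (Xe a) - blinfun_apply (Dh (Xe a)) (Xe b - Xe a))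
      + norm (blinfun_apply (Dh (Xe a)) (sol_remainder w1 h Xe a b))"
      unfolding Ry_eq by (rule norm_triangle_ineq)
    also have "\<dots> \<le> ch * norm (Xe b - Xe a)^2 + ch * norm (sol_remainder w1 h Xe a b)"
    proof (rule add_mono)
      show "norm (h (Xe b) - h (Xe a) - blinfun_apply (Dh (Xe a)) (Xe b - Xe a)) \<le> ch * norm (Xe b - Xe a)^2"
        unfolding ch_def by (rule cb_taylor[OF cb])
      show "norm (blinfun_apply (Dh (Xe a)) (sol_remainder w1 h Xe a b)) \<le> ch * norm (sol_remainder w1 h Xe a b)"
        using norm_blinfun[of "Dh (Xe a)" "sol_remainder w1 h Xe a b"] cb_Dh_bound[OF cb, of "Xe a"]
        unfolding ch_def by (meson mult_right_mono norm_ge_zero order_trans)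
    qed
    finally show ?thesis .
  qed
  define K1 where "K1 = 2 powr q * ch powr q"
  have K10: "0 \<le> K1" unfolding K1_def by simp
  have Ryc: "finite_qvar2 (ctrl_remainder w1 y y') q s t \<and>
      Sup (qvar2_sums (ctrl_remainder w1 y y') q s t) \<le> K1 * SX + K1 * SR"
    unfolding SX_def SR_def
  proof (rule qvar2_compare[OF s0 st tT K10 K10 fX fqR])
    fix a b :: real
    have "norm (ctrl_remainder w1 y y' a b) powr q \<le> (ch * norm (Xe b - Xe a)^2 + ch * norm (sol_remainder w1 h Xe a b)) powr q"
      using Ry_le q0 by (intro powr_mono2) auto
    also have "\<dots> \<le> 2 powr q * ((ch * norm (Xe b - Xe a)^2) powr q + (ch * norm (sol_remainder w1 h Xe a b)) powr q)"
      using ch0 q0 by (intro powr_add_le2) auto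
    also have "\<dots> = K1 * norm (Xe b - Xe a) powr p + K1 * norm (sol_remainder w1 h Xe a b) powr q"
      unfolding K1_def using ch0 qp by (simp add: powr_mult sq_powr algebra_simps)
    finally show "norm (ctrl_remainder w1 y y' a b) powr q \<le> K1 * norm (Xe b - Xe a) powr p + K1 * norm (sol_remainder w1 h Xe a b) powr q" .
  qed
  define Q where "Q = (K1 * C1 powr p + K1 * C1 powr q) powr (1/q)"
  have Q0: "0 \<le> Q" unfolding Q_def by simp
  have QRy: "qvar2 (ctrl_remainder w1 y y') q s t \<le> Q"
  proof -
    have "K1 * SX + K1 * SR \<le> K1 * C1 powr p + K1 * C1 powr q"
      using SXC SRC K10 by (intro add_mono mult_left_mono) auto
    then show ?thesis unfolding qvar2_def Q_def
      using Ryc q0 Sup_qvar2_nonneg[OF st, of "ctrl_remainder w1 y y'" q]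
      by (intro powr_mono2) auto
  qed

  have wh: "norm (w1 b - w1 a) \<le> N1 * (b - a) powr \<gamma>" if "s \<le> a" "a < b" "b \<le> t" for a b
    unfolding N1_def using holder1_bound[OF b1, of a b] that s0 tT by auto
  have Wh: "norm (W1 a b) \<le> N2 * (b - a) powr (2 * \<gamma>)" if "s \<le> a" "a < b" "b \<le> t" for a b
    unfolding N2_def using holder2_bound[OF b2, of a b] that s0 tT by auto
  have wv: "pvar w1 p s t \<le> N1 * \<tau>"
    unfolding pvar_as_qvar2 \<tau>_def
    using qvar2_holder[OF st p0 pg N1, of "\<lambda>a b. w1 b - w1 a"] wh by auto
  have Wv: "qvar2 W1 q s t \<le> N2 * (t - s) powr (2 * \<gamma>)"
    using qvar2_holder[OF st q0 _ N2, of "2 * \<gamma>" W1] Wh pg qp by auto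
  have wv0: "0 \<le> pvar w1 p s t" by (simp add: pvar_def)

  have sewb: "norm (Ist - y s *v (w1 t - w1 s) - second_order_term (y' s) (W1 s t))
      \<le> Cp * (pvar w1 p s t * qvar2 (ctrl_remainder w1 y y') q s t + pvar y' p s t * qvar2 W1 q s t)"
  proof -
    have A: "\<forall>(y :: real \<Rightarrow> real^'d1^'n) y' s t I.
        0 \<le> s \<and> s < t \<and> t \<le> T \<and> has_rough_integral w1 W1 y y' s t I \<and>
        finite_pvar y' p s t \<and> finite_qvar2 (ctrl_remainder w1 y y') (p / 2) s t \<longrightarrow>
        norm (I - y s *v (w1 t - w1 s) - second_order_term (y' s) (W1 s t))
          \<le> Cp * (pvar w1 p s t * qvar2 (ctrl_remainder w1 y y') (p / 2) s t
                  + pvar y' p s t * qvar2 W1 (p / 2) s t)"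
      using sew unfolding sewing_constant_def by blast
    show ?thesis using A[rule_format, of s t y y' Ist] s0 st tT Iint fy' Ryc qp by auto
  qed

  have Mf0: "0 \<le> Mf" using range_norm_bound[OF fb, of "(X0, Y0)"] Mf by (metis norm_ge_zero order_trans)
  have T1: "norm (integral {s..t} F) \<le> Mf * (t - s)"
  proof -
    have "norm (integral {s..t} F) \<le> integral {s..t} (\<lambda>_. Mf)"
    proof (rule integral_norm_bound_integral[OF Fst])
      show "(\<lambda>_. Mf) integrable_on {s..t}" by (rule Henstock_Kurzweil_Integration.integrable_const_ivl)
      fix r show "norm (F r) \<le> Mf" using range_norm_bound[OF fb, of "(Xe r, Ye r)"] Mf unfolding F_def by simp
    qed
    then show ?thesis using st by (simp add: mult.commute)
  qed
  have T2: "norm (y s *v (w1 t - w1 s)) \<le> M * ch * (N1 * \<tau>)"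
  proof -
    have "norm (y s *v (w1 t - w1 s)) \<le> M * norm (y s) * norm (w1 t - w1 s)"
      unfolding M_def by (rule mv_norm_le)
    also have "\<dots> \<le> M * ch * (N1 * \<tau>)"
      using cb_h_bound[OF cb, of "Xe s"] wh[of s t] st M0 ch0 unfolding y_def ch_def \<tau>_def
      by (intro mult_mono mult_left_mono) auto
    finally show ?thesis .
  qed
  have T3: "norm (second_order_term (y' s) (W1 s t)) \<le> D * D * (M * (ch * (M * ch)) * (N2 * (t - s) powr (2 * \<gamma>)))"
  proof -
    have "norm (second_order_term (y' s) (W1 s t)) \<le> D * D * (M * norm (y' s) * norm (W1 s t))"
      unfolding D_def M_def by (rule sot_bound)
    also have "\<dots> \<le> D * D * (M * (ch * (M * ch)) * (N2 * (t - s) powr (2 * \<gamma>)))"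
      using gub_norm[OF cb, of "Xe s"] Wh[of s t] st M0 ch0 unfolding y'_def ch_def M_def D_def
      by (intro mult_mono mult_left_mono) auto
    finally show ?thesis .
  qed
  have T4: "Cp * (pvar w1 p s t * qvar2 (ctrl_remainder w1 y y') q s t + pvar y' p s t * qvar2 W1 q s t)
       \<le> Cp * (N1 * \<tau> * Q + P * (N2 * (t - s) powr (2 * \<gamma>)))"
    using Cp wv QRy Py' Wv N1 \<tau>0 Q0 P0 wv0
    by (intro mult_left_mono add_mono mult_mono) (auto simp: qvar2_def pvar_def)

  have E1: "Mf * (t - s) \<le> (Mf * T powr (1 - \<gamma>)) * \<tau>"
    using ts1 Mf0 by (simp add: mult_left_mono mult.assoc)
  have E2: "M * ch * (N1 * \<tau>) \<le> (M * ch * n) * \<tau>"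
    using N1n M0 ch0 \<tau>0 by (simp add: mult_left_mono mult_right_mono mult.assoc)
  have E3: "D * D * (M * (ch * (M * ch)) * (N2 * (t - s) powr (2 * \<gamma>))) \<le> (D * D * (M * (ch * (M * ch))) * n^2 * T powr \<gamma>) * \<tau>"
  proof -
    have "N2 * (t - s) powr (2 * \<gamma>) \<le> n^2 * (T powr \<gamma> * \<tau>)"
      using N2n ts2 N2 by (intro mult_mono) auto
    then have "D * D * (M * (ch * (M * ch))) * (N2 * (t - s) powr (2 * \<gamma>)) \<le> D * D * (M * (ch * (M * ch))) * (n^2 * (T powr \<gamma> * \<tau>))"
      using M0 ch0 unfolding D_def by (intro mult_left_mono) auto
    then show ?thesis by (simp add: mult_ac)
  qed
  have E4: "Cp * (N1 * \<tau> * Q + P * (N2 * (t - s) powr (2 * \<gamma>))) \<le> (Cp * (n * Q + P * n^2 * T powr \<gamma>)) * \<tau>"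
  proof -
    have a0: "N1 * (Q * \<tau>) \<le> n * (Q * \<tau>)" using N1n \<tau>0 Q0 by (intro mult_right_mono) auto
    have a: "N1 * \<tau> * Q \<le> n * Q * \<tau>" using a0 by (simp add: mult_ac)
    have "N2 * (t - s) powr (2 * \<gamma>) \<le> n^2 * (T powr \<gamma> * \<tau>)"
      using N2n ts2 N2 by (intro mult_mono) auto
    then have b: "P * (N2 * (t - s) powr (2 * \<gamma>)) \<le> P * n^2 * T powr \<gamma> * \<tau>"
      using P0 by (simp add: mult_left_mono mult.assoc)
    have "Cp * (N1 * \<tau> * Q + P * (N2 * (t - s) powr (2 * \<gamma>))) \<le> Cp * (n * Q * \<tau> + P * n^2 * T powr \<gamma> * \<tau>)"
      using a b Cp by (intro mult_left_mono add_mono) auto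
    then show ?thesis by (simp add: algebra_simps)
  qed

  have split: "Xe t - Xe s = integral {s..t} F + y s *v (w1 t - w1 s) + second_order_term (y' s) (W1 s t)
      + (Ist - y s *v (w1 t - w1 s) - second_order_term (y' s) (W1 s t))"
    unfolding Ist_def by (simp add: algebra_simps)
  have "norm (Xe t - Xe s) \<le> norm (integral {s..t} F) + norm (y s *v (w1 t - w1 s)) + norm (second_order_term (y' s) (W1 s t))
      + norm (Ist - y s *v (w1 t - w1 s) - second_order_term (y' s) (W1 s t))"
    unfolding split by (intro order_trans[OF norm_triangle_ineq] add_mono order_refl)
  also have "\<dots> \<le> (Mf * T powr (1 - \<gamma>)) * \<tau> + (M * ch * n) * \<tau> + (D * D * (M * (ch * (M * ch))) * n^2 * T powr \<gamma>) * \<tau>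
      + (Cp * (n * Q + P * n^2 * T powr \<gamma>)) * \<tau>"
    using T1 T2 T3 T4 E1 E2 E3 E4 sewb by linarith
  also have "\<dots> = Kc T \<gamma> p q D M C1 Cp ch Mf n * \<tau>"
    unfolding Kc_def Q_def P_def K1_def L_def by (simp add: algebra_simps)
  finally show ?thesis unfolding \<tau>_def D_def M_def ch_def n_def .
qed



theorem lemma3p4:
  fixes T H H' \<gamma> p q :: real
  assumes "T > 0"
    and "1/3 < H" "H \<le> 1/2" and "1/3 < H'" "H' \<le> 1/2"
    and "\<gamma> < min H H'"
    and "1/3 < 1/p" "1/p < \<gamma>"
    and "q = p / 2"
  shows "\<exists>C2 :: real \<Rightarrow> real \<Rightarrow> real \<Rightarrow> real \<Rightarrow> real \<Rightarrow> real \<Rightarrow> real.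
    \<forall>(w1 :: real \<Rightarrow> real^'d1) W1 (w2 :: real \<Rightarrow> real^'m)
      (f :: real^'n \<Rightarrow> real^'m \<Rightarrow> real^'n) (h :: real^'n \<Rightarrow> real^'d1^'n) Dh D2h D3h
      (g :: real^'n \<Rightarrow> real^'m \<Rightarrow> real^'m) X0 Y0
      (X :: real \<Rightarrow> real \<Rightarrow> real^'n) (Y :: real \<Rightarrow> real \<Rightarrow> real^'m)
      Cf Cg Mf C1 Cp.
      geometric_holder_rough_path w1 W1 \<gamma> 0 T \<and>
      continuous_on UNIV w2 \<and>
      Cf-lipschitz_on UNIV (\<lambda>z. f (fst z) (snd z)) \<and>
      Cb3_with h Dh D2h D3h \<and>
      Cg-lipschitz_on UNIV (\<lambda>z. g (fst z) (snd z)) \<and>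
      bounded (range (\<lambda>z. f (fst z) (snd z))) \<and>
      Mf = (SUP z. norm (f (fst z) (snd z))) \<and>
      (\<forall>\<epsilon>\<in>{0<..1}. solves_slow_fast T w1 W1 w2 f h Dh g X0 Y0 \<epsilon> (X \<epsilon>) (Y \<epsilon>)) \<and>
      (\<forall>\<epsilon>\<in>{0<..1}. finite_pvar (X \<epsilon>) p 0 T \<and>
         finite_qvar2 (sol_remainder w1 h (X \<epsilon>)) q 0 T \<and>
         supnorm (X \<epsilon>) 0 T + pvar (X \<epsilon>) p 0 T + qvar2 (sol_remainder w1 h (X \<epsilon>)) q 0 T \<le> C1) \<and>
      Cp > 1 \<and> sewing_constant Cp w1 W1 p T TYPE('n)
    \<longrightarrow> C2 C1 Cp Cf (C_h_const h Dh D2h D3h) Mf (rp_holder_norm w1 W1 \<gamma> 0 T) > 0 \<and>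
        (\<forall>\<epsilon>\<in>{0<..1}. \<forall>s t. 0 \<le> s \<and> s < t \<and> t \<le> T \<longrightarrow>
           norm (X \<epsilon> t - X \<epsilon> s)
             \<le> C2 C1 Cp Cf (C_h_const h Dh D2h D3h) Mf (rp_holder_norm w1 W1 \<gamma> 0 T) * (t - s) powr \<gamma>)"
proof -
  have p0: "0 < p"
  proof (rule ccontr)
    assume "\<not> 0 < p"
    then have "1/p \<le> 0" by simp
    then show False using assms(7) by linarith
  qed
  have g0: "0 < \<gamma>" using assms(7,8) by linarith
  have g1: "\<gamma> < 1" using assms(3,6) by simp
  have pg: "1 \<le> p * \<gamma>" using assms(8) p0 by (simp add: divide_less_eq mult.commute)
  show ?thesis
    apply (rule exI[of _ "\<lambda>c1 cp cf ch mf n. max 1 (Kc T \<gamma> p q (real CARD('d1)) (real CARD('n) * real CARD('d1)) c1 cp ch mf n)"])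
    apply (intro allI impI)
    subgoal premises prems for w1 W1 w2 f h Dh D2h D3h g X0 Y0 X Y Cf Cg Mf C1 Cp
    proof -
      have geo: "geometric_holder_rough_path w1 W1 \<gamma> 0 T" using prems by blast
      have cb: "Cb3_with h Dh D2h D3h" using prems by blast
      have fb: "bounded (range (\<lambda>z. f (fst z) (snd z)))" using prems by blast
      have Mf: "Mf = (SUP z. norm (f (fst z) (snd z)))" using prems by blast
      have solv: "\<forall>\<epsilon>\<in>{0<..1}. solves_slow_fast T w1 W1 w2 f h Dh g X0 Y0 \<epsilon> (X \<epsilon>) (Y \<epsilon>)" using prems by blast
      have bnds: "\<forall>\<epsilon>\<in>{0<..1}. finite_pvar (X \<epsilon>) p 0 T \<and>
         finite_qvar2 (sol_remainder w1 h (X \<epsilon>)) q 0 T \<and>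
         supnorm (X \<epsilon>) 0 T + pvar (X \<epsilon>) p 0 T + qvar2 (sol_remainder w1 h (X \<epsilon>)) q 0 T \<le> C1" using prems by blast
      have Cp: "Cp > 1" using prems by blast
      have sew: "sewing_constant Cp w1 W1 p T TYPE('n)" using prems by blast
      show ?thesis
      proof (intro conjI ballI allI impI)
        fix \<epsilon> s t :: real
        assume e: "\<epsilon> \<in> {0<..1}" and st: "0 \<le> s \<and> s < t \<and> t \<le> T"
        have b: "finite_pvar (X \<epsilon>) p 0 T" "finite_qvar2 (sol_remainder w1 h (X \<epsilon>)) q 0 T"
          "supnorm (X \<epsilon>) 0 T + pvar (X \<epsilon>) p 0 T + qvar2 (sol_remainder w1 h (X \<epsilon>)) q 0 T \<le> C1"
          using bnds e by auto
        have "norm (X \<epsilon> t - X \<epsilon> s) \<le> Kc T \<gamma> p q (real CARD('d1)) (real CARD('n) * real CARD('d1))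
            C1 Cp (C_h_const h Dh D2h D3h) Mf (rp_holder_norm w1 W1 \<gamma> 0 T) * (t - s) powr \<gamma>"
          using st by (intro main_bound[OF assms(1) p0 g0 g1 pg assms(9) geo cb fb Mf solv[rule_format, OF e] b Cp sew]) auto
        also have "\<dots> \<le> max 1 (Kc T \<gamma> p q (real CARD('d1)) (real CARD('n) * real CARD('d1))
            C1 Cp (C_h_const h Dh D2h D3h) Mf (rp_holder_norm w1 W1 \<gamma> 0 T)) * (t - s) powr \<gamma>"
          by (intro mult_right_mono) auto
        finally show "norm (X \<epsilon> t - X \<epsilon> s) \<le> max 1 (Kc T \<gamma> p q (real CARD('d1)) (real CARD('n) * real CARD('d1))
            C1 Cp (C_h_const h Dh D2h D3h) Mf (rp_holder_norm w1 W1 \<gamma> 0 T)) * (t - s) powr \<gamma>" .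
      qed simp
    qed
    done
qed

end
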